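(* For each $l \in H^*$, the map $\Phi_l = \tau_l \circ \phi^*: R(G/H,1) \to R(G,H)$ is an injective homomorphism of bialgebras (respecting the induction products and restriction coproducts) which sends (classes of) irreducible representations to irreducible representations.
   Context: Let $G$ be a finite abelian group (written additively) and $H \subseteq G$ a subgroup. For $n \ge 1$, $S_n[G] = S_n \ltimes G^n$ is the group of $n \times n$ monomial matrices whose nonzero entries lie in $G$. Let $s: S_n[G] \to G$ be the homomorphism sending a monomial matrix to the sum of its nonzero entries, and let $G_n(G,H) = \{g \in S_n[G] : s(g) \in H\}$. For $n \ge 1$, $R_n(G,H)$ is the Grothendieck group of finite-dimensional complex representations of $G_n(G,H)$, $R_0(G,H) = \mathbb{Z}$, and $R(G,H) = \bigoplus_{n \ge 0} R_n(G,H)$, with graded bilinear form $\langle \cdot,\cdot\rangle$ for which the irreducible classes (and $1 \in R_0$) form an orthonormal basis. Using the block-diagonal embedding $G_k(G,H) \times G_m(G,H) \subseteq G_{k+m}(G,H)$, the product on $R(G,H)$ is induction and the coproduct is restriction. The same construction applied to the pair $(G/H, 1)$ gives $R(G/H,1)$ (here $G_n(G/H,1)$ is the group of monomial matrices with entries in $G/H$ whose entries sum to $0$). A "bialgebra homomorphism" means a map respecting product, unit, coproduct and counit. Let $\phi: G_n(G,H) \to G_n(G/H,1)$ be reduction of the matrix entries mod $H$; it is surjective with kernel the diagonal subgroup $H^n$, and $\phi^*: R(G/H,1) \to R(G,H)$ is the graded map induced by pullback of representations along $\phi$. $H^* = \mathrm{Hom}(H, \mathbb{C}^\times)$; for $l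 \in H^*$, $\tau_l$ is the graded operator on $R(G,H)$ induced by tensoring with the linear character $g \mapsto l(s(g))$ of $G_n(G,H)$ (whose restriction to $H^n$ is $l^{\otimes n}$). *)

theory Defs
  imports "Jordan_Normal_Form.Matrix" "HOL-Algebra.Coset" "HOL-Algebra.FiniteProduct"
          "HOL-Combinatorics.Permutations"
begin

text \<open>An n x n monomial matrix with entries in the group A is encoded as a pair (sigma, f):
  sigma is a permutation of {0..<n}, f i is the entry in column i, sitting in row sigma i;
  f is normalised to the unit of A outside {0..<n}. Matrix multiplication of monomial
  matrices gives the product below.\<close>

definition entry_sum :: "('a,'b) monoid_scheme \<Rightarrow> nat \<Rightarrow> (nat \<Rightarrow> nat) \<times> (nat \<Rightarrow> 'a) \<Rightarrow> 'a" where
  "entry_sum A n g = finprod A (snd g) {..<n}"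

definition mono_grp :: "('a,'b) monoid_scheme \<Rightarrow> 'a set \<Rightarrow> nat \<Rightarrow> ((nat \<Rightarrow> nat) \<times> (nat \<Rightarrow> 'a)) monoid" where
  "mono_grp A K n =
    \<lparr> carrier = {(\<sigma>, f). \<sigma> permutes {..<n} \<and> (\<forall>i<n. f i \<in> carrier A)
                        \<and> (\<forall>i. n \<le> i \<longrightarrow> f i = \<one>\<^bsub>A\<^esub>) \<and> entry_sum A n (\<sigma>, f) \<in> K},
      mult = (\<lambda>(\<sigma>, f) (\<tau>, g). (\<sigma> \<circ> \<tau>, \<lambda>j. if j < n then f (\<tau> j) \<otimes>\<^bsub>A\<^esub> g j else \<one>\<^bsub>A\<^esub>)),
      one = (id, \<lambda>_. \<one>\<^bsub>A\<^esub>) \<rparr>"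

text \<open>Block-diagonal embedding G_k x G_m into G_(k+m).\<close>
definition block_emb :: "nat \<Rightarrow> nat \<Rightarrow> ((nat \<Rightarrow> nat) \<times> (nat \<Rightarrow> 'a)) \<times> ((nat \<Rightarrow> nat) \<times> (nat \<Rightarrow> 'a))
                          \<Rightarrow> (nat \<Rightarrow> nat) \<times> (nat \<Rightarrow> 'a)" where
  "block_emb k m = (\<lambda>((\<sigma>, f), (\<tau>, g)).
     (\<lambda>i. if i < k then \<sigma> i else if i < k + m then k + \<tau> (i - k) else i,
      \<lambda>i. if i < k then f i else g (i - k)))"

text \<open>Reduction of the entries modulo H: G_n(G,H) -> G_n(G/H,1).\<close>
definition reduce :: "('a,'b) monoid_scheme \<Rightarrow> 'a set \<Rightarrow> nat \<Rightarrow> (nat \<Rightarrow> nat) \<times> (nat \<Rightarrow> 'a)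
                        \<Rightarrow> (nat \<Rightarrow> nat) \<times> (nat \<Rightarrow> 'a set)" where
  "reduce G H n g = (fst g, \<lambda>i. if i < n then H #>\<^bsub>G\<^esub> snd g i else H)"

definition is_rep :: "('e,'z) monoid_scheme \<Rightarrow> nat \<Rightarrow> ('e \<Rightarrow> complex mat) \<Rightarrow> bool" where
  "is_rep \<Gamma> d \<rho> \<longleftrightarrow> (\<forall>g\<in>carrier \<Gamma>. \<rho> g \<in> carrier_mat d d)
      \<and> (\<forall>g\<in>carrier \<Gamma>. \<forall>h\<in>carrier \<Gamma>. \<rho> (g \<otimes>\<^bsub>\<Gamma>\<^esub> h) = \<rho> g * \<rho> h)
      \<and> \<rho> \<one>\<^bsub>\<Gamma>\<^esub> = 1\<^sub>m d"

definition mat_tr :: "complex mat \<Rightarrow> complex" where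
  "mat_tr A = (\<Sum>i<dim_row A. A $$ (i, i))"

definition char_of :: "('e,'z) monoid_scheme \<Rightarrow> ('e \<Rightarrow> complex mat) \<Rightarrow> 'e \<Rightarrow> complex" where
  "char_of \<Gamma> \<rho> = (\<lambda>g. if g \<in> carrier \<Gamma> then mat_tr (\<rho> g) else 0)"

definition is_char :: "('e,'z) monoid_scheme \<Rightarrow> ('e \<Rightarrow> complex) \<Rightarrow> bool" where
  "is_char \<Gamma> \<chi> \<longleftrightarrow> (\<exists>d \<rho>. is_rep \<Gamma> d \<rho> \<and> \<chi> = char_of \<Gamma> \<rho>)"

definition inv_subspace :: "('e,'z) monoid_scheme \<Rightarrow> nat \<Rightarrow> ('e \<Rightarrow> complex mat) \<Rightarrow> complex vec set \<Rightarrow> bool" where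
  "inv_subspace \<Gamma> d \<rho> W \<longleftrightarrow> W \<subseteq> carrier_vec d \<and> 0\<^sub>v d \<in> W
      \<and> (\<forall>v\<in>W. \<forall>w\<in>W. v + w \<in> W) \<and> (\<forall>c. \<forall>v\<in>W. c \<cdot>\<^sub>v v \<in> W)
      \<and> (\<forall>g\<in>carrier \<Gamma>. \<forall>v\<in>W. \<rho> g *\<^sub>v v \<in> W)"

definition irred_rep :: "('e,'z) monoid_scheme \<Rightarrow> nat \<Rightarrow> ('e \<Rightarrow> complex mat) \<Rightarrow> bool" where
  "irred_rep \<Gamma> d \<rho> \<longleftrightarrow> is_rep \<Gamma> d \<rho> \<and> 0 < d
      \<and> (\<forall>W. inv_subspace \<Gamma> d \<rho> W \<longrightarrow> W = {0\<^sub>v d} \<or> W = carrier_vec d)"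

definition irr_char :: "('e,'z) monoid_scheme \<Rightarrow> ('e \<Rightarrow> complex) \<Rightarrow> bool" where
  "irr_char \<Gamma> \<chi> \<longleftrightarrow> (\<exists>d \<rho>. irred_rep \<Gamma> d \<rho> \<and> \<chi> = char_of \<Gamma> \<rho>)"

text \<open>The Grothendieck group, realised (via the character map) as the group of virtual characters.\<close>
definition virt_chars :: "('e,'z) monoid_scheme \<Rightarrow> ('e \<Rightarrow> complex) set" where
  "virt_chars \<Gamma> = {\<chi>. \<exists>\<chi>1 \<chi>2. is_char \<Gamma> \<chi>1 \<and> is_char \<Gamma> \<chi>2 \<and> \<chi> = (\<lambda>g. \<chi>1 g - \<chi>2 g)}"

text \<open>Induction along an injective homomorphism iota: K -> Gamma, and restriction.\<close>
definition ind :: "('k,'y) monoid_scheme \<Rightarrow> ('e,'z) monoid_scheme \<Rightarrow> ('k \<Rightarrow> 'e) \<Rightarrow> ('k \<Rightarrow> complex) \<Rightarrow> 'e \<Rightarrow> complex" where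
  "ind K \<Gamma> \<iota> f = (\<lambda>g. if g \<in> carrier \<Gamma> then
       (\<Sum>x\<in>carrier \<Gamma>. \<Sum>y\<in>carrier K. if \<iota> y = x \<otimes>\<^bsub>\<Gamma>\<^esub> g \<otimes>\<^bsub>\<Gamma>\<^esub> inv\<^bsub>\<Gamma>\<^esub> x then f y else 0)
         / of_nat (card (carrier K))
     else 0)"

definition res :: "('k,'y) monoid_scheme \<Rightarrow> ('k \<Rightarrow> 'e) \<Rightarrow> ('e \<Rightarrow> complex) \<Rightarrow> 'k \<Rightarrow> complex" where
  "res K \<iota> F = (\<lambda>y. if y \<in> carrier K then F (\<iota> y) else 0)"

definition Rn :: "('a,'b) monoid_scheme \<Rightarrow> 'a set \<Rightarrow> nat \<Rightarrow> ((nat \<Rightarrow> nat) \<times> (nat \<Rightarrow> 'a) \<Rightarrow> complex) set" where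
  "Rn A K n = virt_chars (mono_grp A K n)"

text \<open>Product R_k x R_m -> R_(k+m): induction of the external tensor product.\<close>
definition prodR :: "('a,'b) monoid_scheme \<Rightarrow> 'a set \<Rightarrow> nat \<Rightarrow> nat
     \<Rightarrow> ((nat \<Rightarrow> nat) \<times> (nat \<Rightarrow> 'a) \<Rightarrow> complex) \<Rightarrow> ((nat \<Rightarrow> nat) \<times> (nat \<Rightarrow> 'a) \<Rightarrow> complex)
     \<Rightarrow> (nat \<Rightarrow> nat) \<times> (nat \<Rightarrow> 'a) \<Rightarrow> complex" where
  "prodR A K k m x y = ind (mono_grp A K k \<times>\<times> mono_grp A K m) (mono_grp A K (k + m)) (block_emb k m)
                          (\<lambda>(a, b). x a * y b)"

text \<open>(k,m)-component of the coproduct R_(k+m) -> R_k (x) R_m = R(G_k x G_m): restriction.\<close>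
definition coprodR :: "('a,'b) monoid_scheme \<Rightarrow> 'a set \<Rightarrow> nat \<Rightarrow> nat
     \<Rightarrow> ((nat \<Rightarrow> nat) \<times> (nat \<Rightarrow> 'a) \<Rightarrow> complex)
     \<Rightarrow> ((nat \<Rightarrow> nat) \<times> (nat \<Rightarrow> 'a)) \<times> ((nat \<Rightarrow> nat) \<times> (nat \<Rightarrow> 'a)) \<Rightarrow> complex" where
  "coprodR A K k m x = res (mono_grp A K k \<times>\<times> mono_grp A K m) (block_emb k m) x"

text \<open>Unit 1 in R_0 (trivial character of the trivial group G_0) and counit (degree-0 value).\<close>
definition unitR :: "('a,'b) monoid_scheme \<Rightarrow> 'a set \<Rightarrow> (nat \<Rightarrow> nat) \<times> (nat \<Rightarrow> 'a) \<Rightarrow> complex" where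
  "unitR A K = (\<lambda>g. if g \<in> carrier (mono_grp A K 0) then 1 else 0)"

definition dual_char :: "('a,'b) monoid_scheme \<Rightarrow> 'a set \<Rightarrow> ('a \<Rightarrow> complex) \<Rightarrow> bool" where
  "dual_char G H l \<longleftrightarrow> (\<forall>a\<in>H. l a \<noteq> 0) \<and> (\<forall>a\<in>H. \<forall>b\<in>H. l (a \<otimes>\<^bsub>G\<^esub> b) = l a * l b)"

definition Phi :: "('a,'b) monoid_scheme \<Rightarrow> 'a set \<Rightarrow> ('a \<Rightarrow> complex) \<Rightarrow> nat
     \<Rightarrow> ((nat \<Rightarrow> nat) \<times> (nat \<Rightarrow> 'a set) \<Rightarrow> complex) \<Rightarrow> (nat \<Rightarrow> nat) \<times> (nat \<Rightarrow> 'a) \<Rightarrow> complex" where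
  "Phi G H l n x = (\<lambda>g. if g \<in> carrier (mono_grp G H n)
       then l (entry_sum G n g) * x (reduce G H n g) else 0)"

text \<open>Phi_l (x) Phi_l on R_k (x) R_m = R(G_k x G_m).\<close>
definition Phi_tensor :: "('a,'b) monoid_scheme \<Rightarrow> 'a set \<Rightarrow> ('a \<Rightarrow> complex) \<Rightarrow> nat \<Rightarrow> nat
     \<Rightarrow> (((nat \<Rightarrow> nat) \<times> (nat \<Rightarrow> 'a set)) \<times> ((nat \<Rightarrow> nat) \<times> (nat \<Rightarrow> 'a set)) \<Rightarrow> complex)
     \<Rightarrow> ((nat \<Rightarrow> nat) \<times> (nat \<Rightarrow> 'a)) \<times> ((nat \<Rightarrow> nat) \<times> (nat \<Rightarrow> 'a)) \<Rightarrow> complex" where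
  "Phi_tensor G H l k m F = (\<lambda>(g1, g2).
     if g1 \<in> carrier (mono_grp G H k) \<and> g2 \<in> carrier (mono_grp G H m)
     then l (entry_sum G k g1) * l (entry_sum G m g2) * F (reduce G H k g1, reduce G H m g2)
     else 0)"

end

theory Submission
  imports Defs
begin


locale mg = comm_group A for A :: "('c,'d) monoid_scheme" (structure) +
  fixes K assumes K: "subgroup K A"
begin

abbreviation "M n \<equiv> mono_grp A K n"

lemma mg_carrier_iff:
  "(\<sigma>, f) \<in> carrier (M n) \<longleftrightarrow> \<sigma> permutes {..<n} \<and> (\<forall>i<n. f i \<in> carrier A)
     \<and> (\<forall>i. n \<le> i \<longrightarrow> f i = \<one>) \<and> entry_sum A n (\<sigma>, f) \<in> K"
  by (simp add: mono_grp_def)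

lemma mg_mult: "(\<sigma>, f) \<otimes>\<^bsub>M n\<^esub> (\<tau>, g) = (\<sigma> \<circ> \<tau>, \<lambda>j. if j < n then f (\<tau> j) \<otimes> g j else \<one>)"
  by (simp add: mono_grp_def)

lemma mg_one: "\<one>\<^bsub>M n\<^esub> = (id, \<lambda>_. \<one>)"
  by (simp add: mono_grp_def)

lemma es_mult:
  assumes "\<tau> permutes {..<n}" "\<forall>i<n. f i \<in> carrier A" "\<forall>i<n. g i \<in> carrier A"
  shows "entry_sum A n (\<sigma> \<circ> \<tau>, \<lambda>j. if j < n then f (\<tau> j) \<otimes> g j else \<one>)
       = entry_sum A n (\<sigma>, f) \<otimes> entry_sum A n (\<tau>, g)"
proof -
  have ti: "\<tau> ` {..<n} = {..<n}" using assms(1) by (rule permutes_image)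
  have fc: "f \<in> {..<n} \<rightarrow> carrier A" "g \<in> {..<n} \<rightarrow> carrier A" using assms by auto
  have fc2: "(\<lambda>j. f (\<tau> j)) \<in> {..<n} \<rightarrow> carrier A" using assms ti by auto
  have "finprod A (\<lambda>j. if j < n then f (\<tau> j) \<otimes> g j else \<one>) {..<n}
      = finprod A (\<lambda>j. f (\<tau> j) \<otimes> g j) {..<n}"
    using fc fc2 by (intro finprod_cong') auto
  also have "\<dots> = finprod A (\<lambda>j. f (\<tau> j)) {..<n} \<otimes> finprod A g {..<n}"
    using fc fc2 by (simp add: finprod_multf)
  also have "finprod A (\<lambda>j. f (\<tau> j)) {..<n} = finprod A f (\<tau> ` {..<n})"
    using finprod_reindex[of f \<tau> "{..<n}"] ti fc permutes_inj_on[OF assms(1)] by simp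
  finally show ?thesis using ti by (simp add: entry_sum_def)
qed

lemma es_closed: "\<forall>i<n. f i \<in> carrier A \<Longrightarrow> entry_sum A n (\<sigma>, f) \<in> carrier A"
  by (auto simp: entry_sum_def intro!: finprod_closed)

lemma es_one: "entry_sum A n (id, \<lambda>_. \<one>) = \<one>"
  by (simp add: entry_sum_def)

lemma mg_m_closed:
  assumes "x \<in> carrier (M n)" "y \<in> carrier (M n)"
  shows "x \<otimes>\<^bsub>M n\<^esub> y \<in> carrier (M n)"
proof -
  obtain \<sigma> f \<tau> g where x: "x = (\<sigma>, f)" and y: "y = (\<tau>, g)" by (cases x, cases y)
  have s: "\<sigma> permutes {..<n}" "\<forall>i<n. f i \<in> carrier A" "entry_sum A n (\<sigma>, f) \<in> K"
   and t: "\<tau> permutes {..<n}" "\<forall>i<n. g i \<in> carrier A" "entry_sum A n (\<tau>, g) \<in> K"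
    using assms x y by (auto simp: mg_carrier_iff)
  have "\<forall>i<n. \<tau> i < n" using permutes_in_image[OF t(1)] by auto
  then have "\<forall>i<n. f (\<tau> i) \<otimes> g i \<in> carrier A" using s t by auto
  moreover have "\<sigma> \<circ> \<tau> permutes {..<n}" using s t by (simp add: permutes_compose)
  moreover have "entry_sum A n (\<sigma> \<circ> \<tau>, \<lambda>j. if j < n then f (\<tau> j) \<otimes> g j else \<one>) \<in> K"
    using es_mult[OF t(1) s(2) t(2)] s t K by (simp add: subgroup.m_closed)
  ultimately show ?thesis using x y by (simp add: mg_mult mg_carrier_iff)
qed

lemma mg_group: "group (M n)"
proof (rule groupI)
  show "\<one>\<^bsub>M n\<^esub> \<in> carrier (M n)"
    using K by (simp add: mg_one mg_carrier_iff es_one permutes_id subgroup.one_closed)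
next
  fix x y assume "x \<in> carrier (M n)" "y \<in> carrier (M n)"
  then show "x \<otimes>\<^bsub>M n\<^esub> y \<in> carrier (M n)" by (rule mg_m_closed)
next
  fix x y z assume a: "x \<in> carrier (M n)" "y \<in> carrier (M n)" "z \<in> carrier (M n)"
  obtain \<sigma> f \<tau> g \<upsilon> h where x: "x = (\<sigma>, f)" and y: "y = (\<tau>, g)" and z: "z = (\<upsilon>, h)"
    by (cases x, cases y, cases z)
  have s: "\<forall>i<n. f i \<in> carrier A" "\<forall>i<n. g i \<in> carrier A" "\<forall>i<n. h i \<in> carrier A"
    and u: "\<upsilon> permutes {..<n}" "\<tau> permutes {..<n}"
    using a x y z by (auto simp: mg_carrier_iff)
  have ui: "\<forall>i<n. \<upsilon> i < n" "\<forall>i<n. \<tau> i < n"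
    using permutes_in_image[OF u(1)] permutes_in_image[OF u(2)] by auto
  show "x \<otimes>\<^bsub>M n\<^esub> y \<otimes>\<^bsub>M n\<^esub> z = x \<otimes>\<^bsub>M n\<^esub> (y \<otimes>\<^bsub>M n\<^esub> z)"
    using s ui by (auto simp: x y z mg_mult o_assoc m_assoc)
next
  fix x assume a: "x \<in> carrier (M n)"
  obtain \<sigma> f where x: "x = (\<sigma>, f)" by (cases x)
  then show "\<one>\<^bsub>M n\<^esub> \<otimes>\<^bsub>M n\<^esub> x = x"
    using a by (auto simp: mg_one mg_mult mg_carrier_iff)
next
  fix x assume a: "x \<in> carrier (M n)"
  obtain \<sigma> f where x: "x = (\<sigma>, f)" by (cases x)
  have s: "\<sigma> permutes {..<n}" "\<forall>i<n. f i \<in> carrier A" "\<forall>i. n \<le> i \<longrightarrow> f i = \<one>"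
    "entry_sum A n (\<sigma>, f) \<in> K"
    using a x by (auto simp: mg_carrier_iff)
  define y where "y = (Hilbert_Choice.inv \<sigma>, \<lambda>i. if i < n then inv\<^bsub>A\<^esub> (f (Hilbert_Choice.inv \<sigma> i)) else \<one>)"
  have ip: "Hilbert_Choice.inv \<sigma> permutes {..<n}" using s(1) by (rule permutes_inv)
  have ii: "\<forall>i<n. Hilbert_Choice.inv \<sigma> i < n" using permutes_in_image[OF ip] by auto
  have si: "\<forall>i<n. \<sigma> i < n" using permutes_in_image[OF s(1)] by auto
  have yc: "\<forall>i<n. snd y i \<in> carrier A" using ii s by (auto simp: y_def)
  have prod: "y \<otimes>\<^bsub>M n\<^esub> x = \<one>\<^bsub>M n\<^esub>"
    using s si permutes_inv_o(2)[OF s(1)] permutes_inverses(2)[OF s(1)]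
    by (auto simp: y_def x mg_mult mg_one)
  have "entry_sum A n (Hilbert_Choice.inv \<sigma> \<circ> \<sigma>, \<lambda>j. if j < n then snd y (\<sigma> j) \<otimes> f j else \<one>)
      = entry_sum A n y \<otimes> entry_sum A n (\<sigma>, f)"
    using es_mult[OF s(1) yc s(2), of "Hilbert_Choice.inv \<sigma>"] by (simp add: y_def)
  moreover have "(Hilbert_Choice.inv \<sigma> \<circ> \<sigma>, \<lambda>j. if j < n then snd y (\<sigma> j) \<otimes> f j else \<one>) = (id, \<lambda>_. \<one>)"
    using si s(2) permutes_inv_o(2)[OF s(1)] permutes_inverses(2)[OF s(1)]
    by (auto simp: y_def)
  ultimately have e: "entry_sum A n y \<otimes> entry_sum A n (\<sigma>, f) = \<one>" by (simp add: es_one)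
  have ec: "entry_sum A n y \<in> carrier A" using yc es_closed[of n "snd y" "fst y"] by simp
  have "entry_sum A n y = inv (entry_sum A n (\<sigma>, f))"
    using e ec es_closed[OF s(2)] by (metis inv_equality)
  then have "entry_sum A n y \<in> K" using s(4) K by (simp add: subgroup.m_inv_closed)
  then have "y \<in> carrier (M n)"
    using ip yc by (auto simp: y_def mg_carrier_iff)
  then show "\<exists>y\<in>carrier (M n). y \<otimes>\<^bsub>M n\<^esub> x = \<one>\<^bsub>M n\<^esub>" using prod by blast
qed

lemma mg_is_group: "group (M n)" by (rule mg_group)

lemma es_hom:
  assumes "x \<in> carrier (M n)" "y \<in> carrier (M n)"
  shows "entry_sum A n (x \<otimes>\<^bsub>M n\<^esub> y) = entry_sum A n x \<otimes> entry_sum A n y"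
proof -
  obtain \<sigma> f \<tau> g where x: "x = (\<sigma>, f)" and y: "y = (\<tau>, g)" by (cases x, cases y)
  show ?thesis using assms es_mult[of \<tau> n f g \<sigma>] by (auto simp: x y mg_mult mg_carrier_iff)
qed

lemma es_carrier: "x \<in> carrier (M n) \<Longrightarrow> entry_sum A n x \<in> carrier A"
  by (cases x) (auto simp: mg_carrier_iff intro: es_closed)

lemma es_K: "x \<in> carrier (M n) \<Longrightarrow> entry_sum A n x \<in> K"
  by (cases x) (auto simp: mg_carrier_iff)

lemma es_conj:
  assumes "x \<in> carrier (M n)" "g \<in> carrier (M n)"
  shows "entry_sum A n (x \<otimes>\<^bsub>M n\<^esub> g \<otimes>\<^bsub>M n\<^esub> inv\<^bsub>M n\<^esub> x) = entry_sum A n g"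
proof -
  interpret MG: group "M n" by (rule mg_group)
  have ix: "inv\<^bsub>M n\<^esub> x \<in> carrier (M n)" using assms by simp
  have "entry_sum A n x \<otimes> entry_sum A n (inv\<^bsub>M n\<^esub> x) = entry_sum A n (\<one>\<^bsub>M n\<^esub>)"
    using es_hom[OF assms(1) ix] assms by simp
  then have e: "entry_sum A n x \<otimes> entry_sum A n (inv\<^bsub>M n\<^esub> x) = \<one>"
    by (simp add: mg_one es_one)
  have "entry_sum A n (x \<otimes>\<^bsub>M n\<^esub> g \<otimes>\<^bsub>M n\<^esub> inv\<^bsub>M n\<^esub> x)
     = entry_sum A n x \<otimes> entry_sum A n g \<otimes> entry_sum A n (inv\<^bsub>M n\<^esub> x)"
    using assms ix by (simp add: es_hom)
  also have "\<dots> = entry_sum A n g \<otimes> (entry_sum A n x \<otimes> entry_sum A n (inv\<^bsub>M n\<^esub> x))"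
    using assms ix es_carrier by (metis m_assoc m_comm)
  finally show ?thesis using e assms es_carrier by simp
qed

lemma block_perm:
  fixes k m :: nat
  assumes "\<sigma> permutes {..<k}" "\<tau> permutes {..<m}"
  shows "(\<lambda>i. if i < k then \<sigma> i else if i < k + m then k + \<tau> (i - k) else i) permutes {..<k+m}"
    (is "?p permutes _")
proof (rule bij_imp_permutes)
  have s1: "\<forall>i<k. \<sigma> i < k" using permutes_in_image[OF assms(1)] by auto
  have s2: "\<forall>i<m. \<tau> i < m" using permutes_in_image[OF assms(2)] by auto
  have i1: "inj_on \<sigma> {..<k}" "inj_on \<tau> {..<m}" using assms permutes_inj_on by auto
  have im1: "\<sigma> ` {..<k} = {..<k}" "\<tau> ` {..<m} = {..<m}" using assms permutes_image by auto
  show "bij_betw ?p {..<k+m} {..<k+m}"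
    unfolding bij_betw_def
  proof
    show "inj_on ?p {..<k+m}"
    proof (rule inj_onI)
      fix x y assume xy: "x \<in> {..<k+m}" "y \<in> {..<k+m}" "?p x = ?p y"
      show "x = y"
      proof (cases "x < k")
        case True
        show ?thesis
        proof (cases "y < k")
          case True then show ?thesis using \<open>x < k\<close> xy i1(1) by (auto dest: inj_onD)
        next
          case False then show ?thesis using \<open>x < k\<close> xy s1[rule_format, of x] by auto
        qed
      next
        case False
        show ?thesis
        proof (cases "y < k")
          case True then show ?thesis using \<open>\<not> x < k\<close> xy s1[rule_format, of y] by auto
        next
          case False
          then have "\<tau> (x - k) = \<tau> (y - k)" using \<open>\<not> x < k\<close> xy by auto
          then have "x - k = y - k" using i1(2) xy \<open>\<not> x < k\<close> False by (auto dest: inj_onD)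
          then show ?thesis using \<open>\<not> x < k\<close> False by auto
        qed
      qed
    qed
    show "?p ` {..<k+m} = {..<k+m}"
    proof
      show "?p ` {..<k+m} \<subseteq> {..<k+m}" using s1 s2 by auto
      show "{..<k+m} \<subseteq> ?p ` {..<k+m}"
      proof
        fix y assume y: "y \<in> {..<k+m}"
        show "y \<in> ?p ` {..<k+m}"
        proof (cases "y < k")
          case True
          then obtain x where "x < k" "\<sigma> x = y" using im1(1) by (metis imageE lessThan_iff)
          then show ?thesis by (intro image_eqI[of _ _ x]) auto
        next
          case False
          then have "y - k < m" using y by auto
          then obtain x where x: "x < m" "\<tau> x = y - k" using im1(2) by (metis imageE lessThan_iff)
          then show ?thesis using False by (intro image_eqI[of _ _ "x + k"]) auto
        qed
      qed
    qed
  qed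
qed auto

lemma es_block:
  assumes "\<forall>i<k. f i \<in> carrier A" "\<forall>i<m. g i \<in> carrier A"
  shows "entry_sum A (k + m) (block_emb k m ((\<sigma>, f), (\<tau>, g))) = entry_sum A k (\<sigma>, f) \<otimes> entry_sum A m (\<tau>, g)"
proof -
  define h where "h = (\<lambda>i. if i < k then f i else g (i - k))"
  have bs: "entry_sum A (k + m) (block_emb k m ((\<sigma>, f), (\<tau>, g))) = finprod A h {..<k+m}"
    by (simp add: entry_sum_def block_emb_def h_def)
  have un: "{..<k+m} = {..<k} \<union> {k..<k+m}" by auto
  have h1: "h \<in> {..<k} \<rightarrow> carrier A" using assms(1) by (simp add: h_def)
  have h2: "h \<in> {k..<k+m} \<rightarrow> carrier A"
  proof
    fix i assume "i \<in> {k..<k+m}" then have "\<not> i < k" "i - k < m" by auto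
    then show "h i \<in> carrier A" using assms(2) by (simp add: h_def)
  qed
  have "finprod A h {..<k+m} = finprod A h {..<k} \<otimes> finprod A h {k..<k+m}"
    unfolding un by (rule finprod_Un_disjoint) (use h1 h2 in auto)
  also have "finprod A h {..<k} = finprod A f {..<k}"
    by (rule finprod_cong') (use assms in \<open>simp_all add: h_def Pi_def\<close>)
  also have "finprod A h {k..<k+m} = finprod A g {..<m}"
  proof -
    have im: "{k..<k+m} = (\<lambda>i. i + k) ` {..<m}"
    proof
      show "{k..<k+m} \<subseteq> (\<lambda>i. i + k) ` {..<m}"
      proof
        fix x assume "x \<in> {k..<k+m}" then show "x \<in> (\<lambda>i. i + k) ` {..<m}"
          by (intro image_eqI[of _ _ "x - k"]) auto
      qed
      show "(\<lambda>i. i + k) ` {..<m} \<subseteq> {k..<k+m}" by auto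
    qed
    have "finprod A h ((\<lambda>i. i + k) ` {..<m}) = finprod A (\<lambda>i. h (i + k)) {..<m}"
    proof (rule finprod_reindex)
      show "h \<in> (\<lambda>i. i + k) ` {..<m} \<rightarrow> carrier A" using h2 unfolding im[symmetric] .
      show "inj_on (\<lambda>i. i + k) {..<m}" by (simp add: inj_on_def)
    qed
    also have "\<dots> = finprod A g {..<m}"
      by (rule finprod_cong') (use assms in \<open>simp_all add: h_def Pi_def\<close>)
    finally show ?thesis unfolding im[symmetric] .
  qed
  finally show ?thesis using bs by (simp add: entry_sum_def)
qed

lemma block_carrier:
  assumes "y1 \<in> carrier (M k)" "y2 \<in> carrier (M m)"
  shows "block_emb k m (y1, y2) \<in> carrier (M (k + m))"
proof -
  obtain \<sigma> f \<tau> g where y: "y1 = (\<sigma>, f)" "y2 = (\<tau>, g)" by (cases y1, cases y2)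
  have a: "\<sigma> permutes {..<k}" "\<forall>i<k. f i \<in> carrier A" "\<forall>i. k \<le> i \<longrightarrow> f i = \<one>" "entry_sum A k (\<sigma>, f) \<in> K"
       "\<tau> permutes {..<m}" "\<forall>i<m. g i \<in> carrier A" "\<forall>i. m \<le> i \<longrightarrow> g i = \<one>" "entry_sum A m (\<tau>, g) \<in> K"
    using assms y by (auto simp: mg_carrier_iff)
  have "entry_sum A (k + m) (block_emb k m ((\<sigma>, f), (\<tau>, g))) \<in> K"
    using es_block[OF a(2) a(6)] a K by (simp add: subgroup.m_closed)
  then show ?thesis using a block_perm[OF a(1) a(5)] unfolding y
    by (auto simp: block_emb_def mg_carrier_iff)
qed

lemma block_inj: "inj_on (block_emb k m) (carrier (M k) \<times> carrier (M m))"
proof (rule inj_onI)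
  fix y z assume yz: "y \<in> carrier (M k) \<times> carrier (M m)" "z \<in> carrier (M k) \<times> carrier (M m)"
    "block_emb k m y = block_emb k m z"
  obtain \<sigma> f \<tau> g \<sigma>' f' \<tau>' g' where y: "y = ((\<sigma>, f), (\<tau>, g))" and z: "z = ((\<sigma>', f'), (\<tau>', g'))"
    by (metis prod.collapse)
  have a: "\<sigma> permutes {..<k}" "\<forall>i. k \<le> i \<longrightarrow> f i = \<one>" "\<tau> permutes {..<m}"
    "\<sigma>' permutes {..<k}" "\<forall>i. k \<le> i \<longrightarrow> f' i = \<one>" "\<tau>' permutes {..<m}"
    using yz(1,2) y z by (auto simp: mg_carrier_iff)
  have E: "(\<lambda>i. if i < k then \<sigma> i else if i < k + m then k + \<tau> (i - k) else i)
             = (\<lambda>i. if i < k then \<sigma>' i else if i < k + m then k + \<tau>' (i - k) else i)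
     \<and> (\<lambda>i. if i < k then f i else g (i - k)) = (\<lambda>i. if i < k then f' i else g' (i - k))"
    using yz(3) unfolding y z block_emb_def by simp
  have e1: "(if i < k then \<sigma> i else if i < k + m then k + \<tau> (i - k) else i)
             = (if i < k then \<sigma>' i else if i < k + m then k + \<tau>' (i - k) else i)" for i
    using fun_cong[OF conjunct1[OF E], of i] by simp
  have e2: "(if i < k then f i else g (i - k)) = (if i < k then f' i else g' (i - k))" for i
    using fun_cong[OF conjunct2[OF E], of i] by simp
  have "\<sigma> = \<sigma>'"
  proof
    fix i show "\<sigma> i = \<sigma>' i"
      using e1[of i] permutes_not_in[OF a(1), of i] permutes_not_in[OF a(4), of i]
      by (cases "i < k") auto
  qed
  moreover have "\<tau> = \<tau>'"
  proof
    fix i show "\<tau> i = \<tau>' i"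
      using e1[of "i + k"] permutes_not_in[OF a(3), of i] permutes_not_in[OF a(6), of i]
      by (cases "i < m") auto
  qed
  moreover have "f = f'"
  proof
    fix i show "f i = f' i" using e2[of i] a(2,5) by (cases "i < k") auto
  qed
  moreover have "g = g'"
  proof
    fix i show "g i = g' i" using e2[of "i + k"] by simp
  qed
  ultimately show "y = z" using y z by simp
qed

end

lemma ext_bij:
  fixes n :: nat
  shows "bij_betw (\<lambda>\<phi> i. if i < n then \<phi> i else d) (PiE {..<n} B)
     {f. (\<forall>i<n. f i \<in> B i) \<and> (\<forall>i. n \<le> i \<longrightarrow> f i = d)}"
  unfolding bij_betw_def
proof
  show "inj_on (\<lambda>\<phi> i. if i < n then \<phi> i else d) (PiE {..<n} B)"
  proof (rule inj_onI)
    fix \<phi> \<psi> assume a: "\<phi> \<in> PiE {..<n} B" "\<psi> \<in> PiE {..<n} B"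
      "(\<lambda>i. if i < n then \<phi> i else d) = (\<lambda>i. if i < n then \<psi> i else d)"
    show "\<phi> = \<psi>"
    proof (rule PiE_ext[OF a(1,2)])
      fix i assume "i \<in> {..<n}" then show "\<phi> i = \<psi> i" using fun_cong[OF a(3), of i] by simp
    qed
  qed
  show "(\<lambda>\<phi> i. if i < n then \<phi> i else d) ` PiE {..<n} B
     = {f. (\<forall>i<n. f i \<in> B i) \<and> (\<forall>i. n \<le> i \<longrightarrow> f i = d)}"
  proof
    show "(\<lambda>\<phi> i. if i < n then \<phi> i else d) ` PiE {..<n} B
     \<subseteq> {f. (\<forall>i<n. f i \<in> B i) \<and> (\<forall>i. n \<le> i \<longrightarrow> f i = d)}"
    proof (rule subsetI)
      fix f assume "f \<in> (\<lambda>\<phi> i. if i < n then \<phi> i else d) ` PiE {..<n} B"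
      then obtain \<phi> where \<phi>: "\<phi> \<in> PiE {..<n} B" and f: "f = (\<lambda>i. if i < n then \<phi> i else d)"
        by blast
      have "\<forall>i<n. f i \<in> B i" using \<phi> f by (simp add: PiE_iff)
      moreover have "\<forall>i. n \<le> i \<longrightarrow> f i = d" using f by simp
      ultimately show "f \<in> {f. (\<forall>i<n. f i \<in> B i) \<and> (\<forall>i. n \<le> i \<longrightarrow> f i = d)}" by simp
    qed
    show "{f. (\<forall>i<n. f i \<in> B i) \<and> (\<forall>i. n \<le> i \<longrightarrow> f i = d)}
      \<subseteq> (\<lambda>\<phi> i. if i < n then \<phi> i else d) ` PiE {..<n} B"
    proof
      fix f assume f: "f \<in> {f. (\<forall>i<n. f i \<in> B i) \<and> (\<forall>i. n \<le> i \<longrightarrow> f i = d)}"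
      show "f \<in> (\<lambda>\<phi> i. if i < n then \<phi> i else d) ` PiE {..<n} B"
      proof (rule image_eqI[of _ _ "restrict f {..<n}"])
        show "f = (\<lambda>i. if i < n then restrict f {..<n} i else d)" using f by (auto simp: fun_eq_iff)
        show "restrict f {..<n} \<in> PiE {..<n} B" using f by auto
      qed
    qed
  qed
qed

lemma ext_card:
  fixes n :: nat
  assumes "\<And>i. i < n \<Longrightarrow> finite (B i)"
  shows "finite {f. (\<forall>i<n. f i \<in> B i) \<and> (\<forall>i. n \<le> i \<longrightarrow> f i = d)}"
    "card {f. (\<forall>i<n. f i \<in> B i) \<and> (\<forall>i. n \<le> i \<longrightarrow> f i = d)} = (\<Prod>i<n. card (B i))"
proof -
  have "finite (PiE {..<n} B)" by (rule finite_PiE) (simp_all add: assms)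
  then show "finite {f. (\<forall>i<n. f i \<in> B i) \<and> (\<forall>i. n \<le> i \<longrightarrow> f i = d)}"
    using ext_bij[of n d B] bij_betw_finite by blast
  show "card {f. (\<forall>i<n. f i \<in> B i) \<and> (\<forall>i. n \<le> i \<longrightarrow> f i = d)} = (\<Prod>i<n. card (B i))"
    using ext_bij[of n d B] bij_betw_same_card card_PiE[of "{..<n}" B] by fastforce
qed




locale setting = comm_group G for G :: "'a monoid" (structure) +
  fixes H assumes Hsub: "subgroup H G" and fin: "finite (carrier G)"
begin

lemma Hnormal: "H \<lhd> G" using Hsub by (rule subgroup_imp_normal)
lemma Q_cg: "comm_group (G Mod H)" by (rule abelian_FactGroup[OF Hsub])
lemma Q_group: "group (G Mod H)" using Q_cg comm_group.axioms(2) by blast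
lemma Q_triv: "subgroup {H} (G Mod H)"
  using group.triv_subgroup[OF Q_group] by simp

sublocale GM: mg G H
  by (rule mg.intro[OF comm_group_axioms], rule mg_axioms.intro[OF Hsub])
sublocale QM: mg "G Mod H" "{H}"
  by (rule mg.intro[OF Q_cg], rule mg_axioms.intro[OF Q_triv])

abbreviation "\<Gamma> n \<equiv> mono_grp G H n"
abbreviation "\<Gamma>' n \<equiv> mono_grp (G Mod H) {H} n"
abbreviation "red n \<equiv> reduce G H n"

lemma HG: "H \<subseteq> carrier G" using Hsub subgroup.subset by blast

lemma Q_carrier: "carrier (G Mod H) = rcosets H" by (simp add: FactGroup_def)

lemma rc: "x \<in> carrier G \<Longrightarrow> H #> x \<in> carrier (G Mod H)"
  using HG by (simp add: Q_carrier rcosetsI)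

lemma rc_H: "x \<in> carrier G \<Longrightarrow> (H #> x = H) \<longleftrightarrow> x \<in> H"
  using subgroup.rcos_const[OF Hsub is_group] rcos_self[OF _ Hsub] by metis

lemma red_pair: "red n (\<sigma>, f) = (\<sigma>, \<lambda>i. if i < n then H #> f i else H)"
  unfolding reduce_def fst_conv snd_conv by (rule refl)

lemma fp_hom:
  fixes n :: nat
  shows "(\<forall>i<n. f i \<in> carrier G) \<Longrightarrow>
    finprod (G Mod H) (\<lambda>i. H #> f i) {..<n} = H #> finprod G f {..<n}"
proof (induction n)
  case 0
  then show ?case using HG by simp
next
  case (Suc n)
  have fc: "f \<in> {..<n} \<rightarrow> carrier G" "f n \<in> carrier G" using Suc.prems by auto
  have qc: "(\<lambda>i. H #> f i) \<in> {..<n} \<rightarrow> carrier (G Mod H)" "H #> f n \<in> carrier (G Mod H)"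
    using fc rc by auto
  have "finprod (G Mod H) (\<lambda>i. H #> f i) {..<Suc n}
      = (H #> f n) \<otimes>\<^bsub>G Mod H\<^esub> finprod (G Mod H) (\<lambda>i. H #> f i) {..<n}"
    unfolding lessThan_Suc using qc by (simp add: QM.finprod_insert)
  also have "\<dots> = (H #> f n) <#> (H #> finprod G f {..<n})"
    using Suc by simp
  also have "\<dots> = H #> (f n \<otimes> finprod G f {..<n})"
    using fc by (simp add: normal.rcos_sum[OF Hnormal])
  also have "f n \<otimes> finprod G f {..<n} = finprod G f {..<Suc n}"
    unfolding lessThan_Suc using fc by simp
  finally show ?case .
qed

lemma red_es:
  assumes "\<forall>i<n. f i \<in> carrier G"
  shows "entry_sum (G Mod H) n (red n (\<sigma>, f)) = H #> entry_sum G n (\<sigma>, f)"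
proof -
  have "finprod (G Mod H) (\<lambda>i. if i < n then H #> f i else H) {..<n}
      = finprod (G Mod H) (\<lambda>i. H #> f i) {..<n}"
    using assms rc by (intro QM.finprod_cong') auto
  then show ?thesis using fp_hom[OF assms] by (simp add: entry_sum_def red_pair)
qed

lemma es_red_iff:
  assumes "\<forall>i<n. f i \<in> carrier G"
  shows "entry_sum G n (\<sigma>, f) \<in> H \<longleftrightarrow> entry_sum (G Mod H) n (red n (\<sigma>, f)) \<in> {H}"
  using red_es[OF assms] rc_H[OF GM.es_closed[OF assms]] by simp

lemma red_carrier:
  assumes "x \<in> carrier (\<Gamma> n)" shows "red n x \<in> carrier (\<Gamma>' n)"
proof -
  obtain \<sigma> f where x: "x = (\<sigma>, f)" by (cases x)
  have a: "\<sigma> permutes {..<n}" "\<forall>i<n. f i \<in> carrier G" "entry_sum G n (\<sigma>, f) \<in> H"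
    using assms x by (auto simp: GM.mg_carrier_iff)
  have "entry_sum (G Mod H) n (red n (\<sigma>, f)) \<in> {H}" using es_red_iff[OF a(2)] a(3) by simp
  then show ?thesis using a rc unfolding x
    by (simp add: red_pair QM.mg_carrier_iff del: insert_iff)
qed

lemma red_mult:
  assumes "x \<in> carrier (\<Gamma> n)" "y \<in> carrier (\<Gamma> n)"
  shows "red n (x \<otimes>\<^bsub>\<Gamma> n\<^esub> y) = red n x \<otimes>\<^bsub>\<Gamma>' n\<^esub> red n y"
proof -
  obtain \<sigma> f \<tau> g where x: "x = (\<sigma>, f)" and y: "y = (\<tau>, g)" by (cases x, cases y)
  have a: "\<forall>i<n. f i \<in> carrier G" "\<tau> permutes {..<n}" "\<forall>i<n. g i \<in> carrier G"
    using assms x y by (auto simp: GM.mg_carrier_iff)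
  have ti: "\<forall>i<n. \<tau> i < n" using permutes_in_image[OF a(2)] by auto
  show ?thesis unfolding x y GM.mg_mult QM.mg_mult red_pair
    using a ti by (auto simp: fun_eq_iff normal.rcos_sum[OF Hnormal])
qed

lemma red_one: "red n \<one>\<^bsub>\<Gamma> n\<^esub> = \<one>\<^bsub>\<Gamma>' n\<^esub>"
  using HG by (simp add: GM.mg_one QM.mg_one red_pair fun_eq_iff)

lemma red_inv:
  assumes "x \<in> carrier (\<Gamma> n)" shows "red n (inv\<^bsub>\<Gamma> n\<^esub> x) = inv\<^bsub>\<Gamma>' n\<^esub> (red n x)"
proof -
  interpret A: group "\<Gamma> n" by (rule GM.mg_group)
  interpret B: group "\<Gamma>' n" by (rule QM.mg_group)
  have ic: "inv\<^bsub>\<Gamma> n\<^esub> x \<in> carrier (\<Gamma> n)" using assms by simp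
  have "red n (inv\<^bsub>\<Gamma> n\<^esub> x) \<otimes>\<^bsub>\<Gamma>' n\<^esub> red n x = \<one>\<^bsub>\<Gamma>' n\<^esub>"
    using red_mult[OF ic assms] assms red_one by simp
  then show ?thesis using B.inv_equality red_carrier assms ic by metis
qed

lemma fiber_eq:
  assumes "(\<sigma>', F) \<in> carrier (\<Gamma>' n)"
  shows "{x \<in> carrier (\<Gamma> n). red n x = (\<sigma>', F)}
       = Pair \<sigma>' ` {f. (\<forall>i<n. f i \<in> F i) \<and> (\<forall>i. n \<le> i \<longrightarrow> f i = \<one>)}"
proof -
  have a: "\<sigma>' permutes {..<n}" "\<forall>i<n. F i \<in> rcosets H" "\<forall>i. n \<le> i \<longrightarrow> F i = H"
    "entry_sum (G Mod H) n (\<sigma>', F) \<in> {H}"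
    using assms by (auto simp: QM.mg_carrier_iff Q_carrier)
  show ?thesis
  proof
    show "{x \<in> carrier (\<Gamma> n). red n x = (\<sigma>', F)}
       \<subseteq> Pair \<sigma>' ` {f. (\<forall>i<n. f i \<in> F i) \<and> (\<forall>i. n \<le> i \<longrightarrow> f i = \<one>)}"
    proof
      fix x assume x: "x \<in> {x \<in> carrier (\<Gamma> n). red n x = (\<sigma>', F)}"
      obtain \<sigma> f where xe: "x = (\<sigma>, f)" by (cases x)
      have b: "\<forall>i<n. f i \<in> carrier G" "\<forall>i. n \<le> i \<longrightarrow> f i = \<one>"
        using x xe by (auto simp: GM.mg_carrier_iff)
      have c0: "\<sigma> = \<sigma>' \<and> (\<lambda>i. if i < n then H #> f i else H) = F"
        using x xe by (simp add: red_pair)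
      have c: "\<sigma> = \<sigma>'" "\<forall>i<n. H #> f i = F i"
      proof -
        show "\<sigma> = \<sigma>'" using c0 by simp
        show "\<forall>i<n. H #> f i = F i"
        proof (intro allI impI)
          fix i assume "i < n" then show "H #> f i = F i" using fun_cong[OF conjunct2[OF c0], of i] by simp
        qed
      qed
      have "\<forall>i<n. f i \<in> F i" using b c rcos_self[OF _ Hsub] by metis
      then show "x \<in> Pair \<sigma>' ` {f. (\<forall>i<n. f i \<in> F i) \<and> (\<forall>i. n \<le> i \<longrightarrow> f i = \<one>)}"
        using b c xe by blast
    qed
  next
    show "Pair \<sigma>' ` {f. (\<forall>i<n. f i \<in> F i) \<and> (\<forall>i. n \<le> i \<longrightarrow> f i = \<one>)}
       \<subseteq> {x \<in> carrier (\<Gamma> n). red n x = (\<sigma>', F)}"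
    proof
      fix x assume "x \<in> Pair \<sigma>' ` {f. (\<forall>i<n. f i \<in> F i) \<and> (\<forall>i. n \<le> i \<longrightarrow> f i = \<one>)}"
      then obtain f where xe: "x = (\<sigma>', f)" and f: "\<forall>i<n. f i \<in> F i" "\<forall>i. n \<le> i \<longrightarrow> f i = \<one>"
        by blast
      have fc: "\<forall>i<n. f i \<in> carrier G"
        using f(1) a(2) subgroup.rcosets_carrier[OF Hsub is_group] by blast
      have fe: "\<forall>i<n. H #> f i = F i"
      proof (intro allI impI)
        fix i assume i: "i < n"
        obtain b where b: "b \<in> carrier G" "F i = H #> b" using a(2) i unfolding RCOSETS_def by blast
        have "f i \<in> F i" using f(1) i by blast
        then have "f i \<in> H #> b" unfolding b(2) .
        then show "H #> f i = F i" using repr_independence[of "f i" H b] b Hsub by simp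
      qed
      have r: "red n x = (\<sigma>', F)"
        using fe a(3) by (auto simp: xe red_pair fun_eq_iff)
      have "entry_sum G n (\<sigma>', f) \<in> H" using es_red_iff[OF fc] r a(4) xe by simp
      then have "x \<in> carrier (\<Gamma> n)" using a(1) fc f(2) xe by (simp add: GM.mg_carrier_iff)
      then show "x \<in> {x \<in> carrier (\<Gamma> n). red n x = (\<sigma>', F)}" using r by simp
    qed
  qed
qed

lemma finH: "finite H" using fin HG finite_subset by blast
lemma cardH: "card H > 0"
  using finH subgroup.one_closed[OF Hsub] card_gt_0_iff by blast

lemma fiber_card:
  assumes "y \<in> carrier (\<Gamma>' n)"
  shows "card {x \<in> carrier (\<Gamma> n). red n x = y} = card H ^ n"
proof -
  obtain \<sigma>' F where y: "y = (\<sigma>', F)" by (cases y)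
  have a: "\<forall>i<n. F i \<in> rcosets H" using assms y by (auto simp: QM.mg_carrier_iff Q_carrier)
  have fi: "\<And>i. i < n \<Longrightarrow> finite (F i)"
    using a subgroup.rcosets_carrier[OF Hsub is_group] fin finite_subset by metis
  have ci: "\<And>i. i < n \<Longrightarrow> card (F i) = card H"
    using a card_rcosets_equal HG by metis
  have "card (Pair \<sigma>' ` {f. (\<forall>i<n. f i \<in> F i) \<and> (\<forall>i. n \<le> i \<longrightarrow> f i = \<one>)})
      = card {f. (\<forall>i<n. f i \<in> F i) \<and> (\<forall>i. n \<le> i \<longrightarrow> f i = \<one>)}"
    by (rule card_image) (simp add: inj_on_def)
  also have "\<dots> = (\<Prod>i<n. card (F i))" by (rule ext_card(2)[of n F], rule fi)
  also have "\<dots> = card H ^ n" using ci by simp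
  finally show ?thesis using fiber_eq assms y by simp
qed

lemma fin_Gamma: "finite (carrier (\<Gamma> n))"
proof -
  have "carrier (\<Gamma> n) \<subseteq> {\<sigma>. \<sigma> permutes {..<n}} \<times> {f. (\<forall>i<n. f i \<in> carrier G) \<and> (\<forall>i. n \<le> i \<longrightarrow> f i = \<one>)}"
    by (auto simp: mono_grp_def)
  moreover have "finite ({\<sigma>. \<sigma> permutes {..<n}} \<times> {f. (\<forall>i<n. f i \<in> carrier G) \<and> (\<forall>i. n \<le> i \<longrightarrow> f i = \<one>)})"
    using finite_permutations[of "{..<n}"] ext_card(1)[of n "\<lambda>_. carrier G" \<one>] fin by simp
  ultimately show ?thesis using finite_subset by blast
qed

lemma red_surj: "red n ` carrier (\<Gamma> n) = carrier (\<Gamma>' n)"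
proof
  show "red n ` carrier (\<Gamma> n) \<subseteq> carrier (\<Gamma>' n)" using red_carrier by blast
  show "carrier (\<Gamma>' n) \<subseteq> red n ` carrier (\<Gamma> n)"
  proof
    fix y assume y: "y \<in> carrier (\<Gamma>' n)"
    have "card {x \<in> carrier (\<Gamma> n). red n x = y} > 0" using fiber_card[OF y] cardH by simp
    then obtain x where "x \<in> carrier (\<Gamma> n)" "red n x = y"
      using card_gt_0_iff[of "{x \<in> carrier (\<Gamma> n). red n x = y}"] by auto
    then show "y \<in> red n ` carrier (\<Gamma> n)" by blast
  qed
qed

lemma fin_Gamma': "finite (carrier (\<Gamma>' n))"
  using red_surj fin_Gamma finite_imageI by metis

lemma sum_fiber:
  fixes \<phi> :: "_ \<Rightarrow> complex"
  shows "(\<Sum>x\<in>carrier (\<Gamma> n). \<phi> (red n x)) = of_nat (card H ^ n) * (\<Sum>y\<in>carrier (\<Gamma>' n). \<phi> y)"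
proof -
  have "(\<Sum>x\<in>carrier (\<Gamma> n). \<phi> (red n x))
     = (\<Sum>y\<in>carrier (\<Gamma>' n). \<Sum>x\<in>{x \<in> carrier (\<Gamma> n). red n x = y}. \<phi> (red n x))"
    using sum.group[OF fin_Gamma[of n] fin_Gamma'[of n], where g = "red n" and h = "\<lambda>x. \<phi> (red n x)"] red_carrier by fastforce
  also have "\<dots> = (\<Sum>y\<in>carrier (\<Gamma>' n). of_nat (card H ^ n) * \<phi> y)"
  proof (rule sum.cong[OF refl])
    fix y assume y: "y \<in> carrier (\<Gamma>' n)"
    have "(\<Sum>x\<in>{x \<in> carrier (\<Gamma> n). red n x = y}. \<phi> (red n x))
        = (\<Sum>x\<in>{x \<in> carrier (\<Gamma> n). red n x = y}. \<phi> y)" by (rule sum.cong) auto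
    also have "\<dots> = of_nat (card H ^ n) * \<phi> y" using fiber_card[OF y] by simp
    finally show "(\<Sum>x\<in>{x \<in> carrier (\<Gamma> n). red n x = y}. \<phi> (red n x)) = of_nat (card H ^ n) * \<phi> y" .
  qed
  finally show ?thesis by (simp add: sum_distrib_left)
qed

lemma card_Gamma: "card (carrier (\<Gamma> n)) = card H ^ n * card (carrier (\<Gamma>' n))"
proof -
  have "of_nat (card (carrier (\<Gamma> n))) = (of_nat (card H ^ n * card (carrier (\<Gamma>' n))) :: complex)"
    using sum_fiber[where n = n and \<phi> = "\<lambda>_. 1"] by simp
  then show ?thesis using of_nat_eq_iff by blast
qed

end



lemma sum_single:
  assumes "finite S" "inj_on \<iota> S" "y0 \<in> S" "\<iota> y0 = c"
  shows "(\<Sum>y\<in>S. if \<iota> y = c then F y else (0::complex)) = F y0"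
proof -
  have "(\<Sum>y\<in>S. if \<iota> y = c then F y else 0) = (\<Sum>y\<in>S. if y = y0 then F y else 0)"
  proof (rule sum.cong[OF refl])
    fix y assume "y \<in> S"
    then have "\<iota> y = c \<longleftrightarrow> y = y0" using assms inj_onD by metis
    then show "(if \<iota> y = c then F y else 0) = (if y = y0 then F y else 0)" by simp
  qed
  also have "\<dots> = F y0" using assms(1,3) by (simp add: sum.delta')
  finally show ?thesis .
qed

lemma sum_none:
  assumes "\<forall>y\<in>S. \<iota> y \<noteq> c"
  shows "(\<Sum>y\<in>S. if \<iota> y = c then F y else (0::complex)) = 0"
  using assms by (intro sum.neutral) auto

context setting
begin

lemma red_block:
  "red (k + m) (block_emb k m (y1, y2)) = block_emb k m (red k y1, red m y2)"
proof -
  obtain \<sigma> f \<tau> g where y: "y1 = (\<sigma>, f)" "y2 = (\<tau>, g)" by (cases y1, cases y2)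
  show ?thesis unfolding y block_emb_def by (auto simp: red_pair fun_eq_iff)
qed

lemma dual_mult:
  assumes "dual_char G H l" "a \<in> H" "b \<in> H"
  shows "l (a \<otimes> b) = l a * l b"
  using assms by (simp add: dual_char_def)

lemma dual_one:
  assumes "dual_char G H l" shows "l \<one> = 1"
proof -
  have h: "\<one> \<in> H" using Hsub subgroup.one_closed by blast
  have "l \<one> = l \<one> * l \<one>" using dual_mult[OF assms h h] by simp
  moreover have "l \<one> \<noteq> 0" using assms h by (simp add: dual_char_def)
  ultimately show ?thesis by simp
qed

lemma dual_nz:
  assumes "dual_char G H l" "x \<in> carrier (\<Gamma> n)" shows "l (entry_sum G n x) \<noteq> 0"
  using assms GM.es_K by (simp add: dual_char_def)

lemma unblock:
  assumes c: "c \<in> carrier (\<Gamma> (k + m))" and y1: "y1' \<in> carrier (\<Gamma>' k)" and y2: "y2' \<in> carrier (\<Gamma>' m)"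
    and e: "red (k + m) c = block_emb k m (y1', y2')"
  shows "\<exists>y1\<in>carrier (\<Gamma> k). \<exists>y2\<in>carrier (\<Gamma> m). block_emb k m (y1, y2) = c"
proof -
  obtain \<sigma> f where ce: "c = (\<sigma>, f)" by (cases c)
  obtain \<sigma>1 F1 \<sigma>2 F2 where ye: "y1' = (\<sigma>1, F1)" "y2' = (\<sigma>2, F2)" by (cases y1', cases y2')
  have a: "\<forall>i<k+m. f i \<in> carrier G" "\<forall>i. k + m \<le> i \<longrightarrow> f i = \<one>"
    using c ce by (auto simp: GM.mg_carrier_iff)
  have b1: "\<sigma>1 permutes {..<k}" "\<forall>i. k \<le> i \<longrightarrow> F1 i = H" "entry_sum (G Mod H) k (\<sigma>1, F1) \<in> {H}"
    using y1 ye by (auto simp: QM.mg_carrier_iff)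
  have b2: "\<sigma>2 permutes {..<m}" "\<forall>i. m \<le> i \<longrightarrow> F2 i = H" "entry_sum (G Mod H) m (\<sigma>2, F2) \<in> {H}"
    using y2 ye by (auto simp: QM.mg_carrier_iff)
  have e0: "\<sigma> = (\<lambda>i. if i < k then \<sigma>1 i else if i < k + m then k + \<sigma>2 (i - k) else i)
     \<and> (\<lambda>i. if i < k + m then H #> f i else H) = (\<lambda>i. if i < k then F1 i else F2 (i - k))"
    using e unfolding ce ye red_pair block_emb_def by simp
  have e2: "(if i < k + m then H #> f i else H) = (if i < k then F1 i else F2 (i - k))" for i
    using fun_cong[OF conjunct2[OF e0], of i] by simp
  define g1 where "g1 = (\<lambda>i. if i < k then f i else \<one>)"
  define g2 where "g2 = (\<lambda>i. if i < m then f (k + i) else \<one>)"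
  have g1c: "\<forall>i<k. g1 i \<in> carrier G" using a by (simp add: g1_def)
  have g2c: "\<forall>i<m. g2 i \<in> carrier G" using a by (simp add: g2_def)
  have r1: "red k (\<sigma>1, g1) = (\<sigma>1, F1)"
  proof -
    have "(\<lambda>i. if i < k then H #> g1 i else H) = F1"
    proof
      fix i show "(if i < k then H #> g1 i else H) = F1 i"
        using e2[of i] b1(2) by (cases "i < k") (auto simp: g1_def)
    qed
    then show ?thesis by (simp add: red_pair)
  qed
  have r2: "red m (\<sigma>2, g2) = (\<sigma>2, F2)"
  proof -
    have "(\<lambda>i. if i < m then H #> g2 i else H) = F2"
    proof
      fix i show "(if i < m then H #> g2 i else H) = F2 i"
        using e2[of "k + i"] b2(2) by (cases "i < m") (auto simp: g2_def)
    qed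
    then show ?thesis by (simp add: red_pair)
  qed
  have m1: "(\<sigma>1, g1) \<in> carrier (\<Gamma> k)"
    using es_red_iff[OF g1c, of \<sigma>1] r1 b1 g1c by (simp add: GM.mg_carrier_iff g1_def)
  have m2: "(\<sigma>2, g2) \<in> carrier (\<Gamma> m)"
    using es_red_iff[OF g2c, of \<sigma>2] r2 b2 g2c by (simp add: GM.mg_carrier_iff g2_def)
  have "block_emb k m ((\<sigma>1, g1), (\<sigma>2, g2)) = c"
  proof -
    have "(\<lambda>i. if i < k then g1 i else g2 (i - k)) = f"
    proof
      fix i show "(if i < k then g1 i else g2 (i - k)) = f i"
        using a(2) by (cases "i < k"; cases "i < k + m") (auto simp: g1_def g2_def)
    qed
    then show ?thesis unfolding ce block_emb_def using conjunct1[OF e0] by simp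
  qed
  then show ?thesis using m1 m2 by blast
qed

end



context setting
begin

lemma per_x:
  assumes l: "dual_char G H l" and x: "x \<in> carrier (\<Gamma> (k + m))" and g: "g \<in> carrier (\<Gamma> (k + m))"
  shows "(\<Sum>y\<in>carrier (\<Gamma> k \<times>\<times> \<Gamma> m).
            if block_emb k m y = x \<otimes>\<^bsub>\<Gamma> (k + m)\<^esub> g \<otimes>\<^bsub>\<Gamma> (k + m)\<^esub> inv\<^bsub>\<Gamma> (k + m)\<^esub> x
            then (\<lambda>(a, b). Phi G H l k X a * Phi G H l m Y b) y else 0)
       = l (entry_sum G (k + m) g) *
         (\<Sum>y\<in>carrier (\<Gamma>' k \<times>\<times> \<Gamma>' m).
            if block_emb k m y = red (k + m) x \<otimes>\<^bsub>\<Gamma>' (k + m)\<^esub> red (k + m) g \<otimes>\<^bsub>\<Gamma>' (k + m)\<^esub> inv\<^bsub>\<Gamma>' (k + m)\<^esub> red (k + m) x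
            then (\<lambda>(a, b). X a * Y b) y else 0)"
proof -
  interpret A: group "\<Gamma> (k + m)" by (rule GM.mg_group)
  define c where "c = x \<otimes>\<^bsub>\<Gamma> (k + m)\<^esub> g \<otimes>\<^bsub>\<Gamma> (k + m)\<^esub> inv\<^bsub>\<Gamma> (k + m)\<^esub> x"
  have cc: "c \<in> carrier (\<Gamma> (k + m))" using x g by (simp add: c_def)
  have rc: "red (k + m) c = red (k + m) x \<otimes>\<^bsub>\<Gamma>' (k + m)\<^esub> red (k + m) g \<otimes>\<^bsub>\<Gamma>' (k + m)\<^esub> inv\<^bsub>\<Gamma>' (k + m)\<^esub> red (k + m) x"
    using x g by (simp add: c_def red_mult red_inv)
  have ec: "entry_sum G (k + m) c = entry_sum G (k + m) g"
    using GM.es_conj[OF x g] by (simp add: c_def)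
  have finK: "finite (carrier (\<Gamma> k \<times>\<times> \<Gamma> m))" using fin_Gamma by simp
  have finK': "finite (carrier (\<Gamma>' k \<times>\<times> \<Gamma>' m))" using fin_Gamma' by simp
  have injK: "inj_on (block_emb k m) (carrier (\<Gamma> k \<times>\<times> \<Gamma> m))" using GM.block_inj by simp
  have injK': "inj_on (block_emb k m) (carrier (\<Gamma>' k \<times>\<times> \<Gamma>' m))" using QM.block_inj by simp
  show ?thesis
  proof (cases "\<exists>y\<in>carrier (\<Gamma> k \<times>\<times> \<Gamma> m). block_emb k m y = c")
    case True
    then obtain y1 y2 where y1: "y1 \<in> carrier (\<Gamma> k)" and y2: "y2 \<in> carrier (\<Gamma> m)"
      and ye: "block_emb k m (y1, y2) = c" by auto
    have L: "(\<Sum>y\<in>carrier (\<Gamma> k \<times>\<times> \<Gamma> m). if block_emb k m y = c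
            then (\<lambda>(a, b). Phi G H l k X a * Phi G H l m Y b) y else 0)
          = Phi G H l k X y1 * Phi G H l m Y y2"
      using sum_single[OF finK injK _ ye] y1 y2 by simp
    have y1': "red k y1 \<in> carrier (\<Gamma>' k)" and y2': "red m y2 \<in> carrier (\<Gamma>' m)"
      using y1 y2 red_carrier by auto
    have ye': "block_emb k m (red k y1, red m y2) = red (k + m) c"
      using ye red_block by metis
    have R: "(\<Sum>y\<in>carrier (\<Gamma>' k \<times>\<times> \<Gamma>' m). if block_emb k m y = red (k + m) c
            then (\<lambda>(a, b). X a * Y b) y else 0) = X (red k y1) * Y (red m y2)"
      using sum_single[OF finK' injK' _ ye'] y1' y2' by simp
    obtain \<sigma>1 f1 \<sigma>2 f2 where yy: "y1 = (\<sigma>1, f1)" "y2 = (\<sigma>2, f2)" by (cases y1, cases y2)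
    have fc: "\<forall>i<k. f1 i \<in> carrier G" "\<forall>i<m. f2 i \<in> carrier G"
      using y1 y2 yy by (auto simp: GM.mg_carrier_iff)
    have "entry_sum G (k + m) c = entry_sum G k y1 \<otimes> entry_sum G m y2"
      using GM.es_block[OF fc, of \<sigma>1 \<sigma>2] ye yy by simp
    then have "l (entry_sum G (k + m) g) = l (entry_sum G k y1) * l (entry_sum G m y2)"
      using ec dual_mult[OF l] GM.es_K y1 y2 by simp
    then show ?thesis using L R y1 y2 by (simp add: c_def[symmetric] rc[symmetric] Phi_def)
  next
    case False
    have L: "(\<Sum>y\<in>carrier (\<Gamma> k \<times>\<times> \<Gamma> m). if block_emb k m y = c
            then (\<lambda>(a, b). Phi G H l k X a * Phi G H l m Y b) y else 0) = 0"
      using False by (intro sum_none) auto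
    have "\<forall>y\<in>carrier (\<Gamma>' k \<times>\<times> \<Gamma>' m). block_emb k m y \<noteq> red (k + m) c"
    proof
      fix y assume y: "y \<in> carrier (\<Gamma>' k \<times>\<times> \<Gamma>' m)"
      obtain y1' y2' where yy: "y = (y1', y2')" by (cases y)
      show "block_emb k m y \<noteq> red (k + m) c"
      proof
        assume "block_emb k m y = red (k + m) c"
        then obtain z1 z2 where "z1 \<in> carrier (\<Gamma> k)" "z2 \<in> carrier (\<Gamma> m)" "block_emb k m (z1, z2) = c"
          using unblock[OF cc, of y1' y2'] y yy by auto
        then show False using False by auto
      qed
    qed
    then have R: "(\<Sum>y\<in>carrier (\<Gamma>' k \<times>\<times> \<Gamma>' m). if block_emb k m y = red (k + m) c
            then (\<lambda>(a, b). X a * Y b) y else 0) = 0"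
      by (rule sum_none)
    show ?thesis using L R by (simp add: c_def[symmetric] rc[symmetric])
  qed
qed

lemma prod_thm:
  assumes l: "dual_char G H l"
  shows "Phi G H l (k + m) (prodR (G Mod H) {H} k m X Y) = prodR G H k m (Phi G H l k X) (Phi G H l m Y)"
proof
  fix g
  show "Phi G H l (k + m) (prodR (G Mod H) {H} k m X Y) g = prodR G H k m (Phi G H l k X) (Phi G H l m Y) g"
  proof (cases "g \<in> carrier (\<Gamma> (k + m))")
    case False
    then show ?thesis by (simp add: Phi_def prodR_def ind_def)
  next
    case True
    define T' where "T' = (\<lambda>x'. \<Sum>y\<in>carrier (\<Gamma>' k \<times>\<times> \<Gamma>' m).
            if block_emb k m y = x' \<otimes>\<^bsub>\<Gamma>' (k + m)\<^esub> red (k + m) g \<otimes>\<^bsub>\<Gamma>' (k + m)\<^esub> inv\<^bsub>\<Gamma>' (k + m)\<^esub> x'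
            then (\<lambda>(a, b). X a * Y b) y else 0)"
    have rg: "red (k + m) g \<in> carrier (\<Gamma>' (k + m))" using True red_carrier by blast
    have LHS: "Phi G H l (k + m) (prodR (G Mod H) {H} k m X Y) g
       = l (entry_sum G (k + m) g) * ((\<Sum>x'\<in>carrier (\<Gamma>' (k + m)). T' x') / of_nat (card (carrier (\<Gamma>' k \<times>\<times> \<Gamma>' m))))"
      using True rg by (simp add: Phi_def prodR_def ind_def T'_def)
    have "(\<Sum>x\<in>carrier (\<Gamma> (k + m)). \<Sum>y\<in>carrier (\<Gamma> k \<times>\<times> \<Gamma> m).
            if block_emb k m y = x \<otimes>\<^bsub>\<Gamma> (k + m)\<^esub> g \<otimes>\<^bsub>\<Gamma> (k + m)\<^esub> inv\<^bsub>\<Gamma> (k + m)\<^esub> x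
            then (\<lambda>(a, b). Phi G H l k X a * Phi G H l m Y b) y else 0)
        = (\<Sum>x\<in>carrier (\<Gamma> (k + m)). l (entry_sum G (k + m) g) * T' (red (k + m) x))"
      by (rule sum.cong[OF refl], unfold T'_def, rule per_x[OF l _ True], assumption)
    also have "\<dots> = l (entry_sum G (k + m) g) * (\<Sum>x\<in>carrier (\<Gamma> (k + m)). T' (red (k + m) x))"
      by (simp add: sum_distrib_left)
    also have "\<dots> = l (entry_sum G (k + m) g) * (of_nat (card H ^ (k + m)) * (\<Sum>x'\<in>carrier (\<Gamma>' (k + m)). T' x'))"
      by (simp add: sum_fiber)
    finally have S: "(\<Sum>x\<in>carrier (\<Gamma> (k + m)). \<Sum>y\<in>carrier (\<Gamma> k \<times>\<times> \<Gamma> m).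
            if block_emb k m y = x \<otimes>\<^bsub>\<Gamma> (k + m)\<^esub> g \<otimes>\<^bsub>\<Gamma> (k + m)\<^esub> inv\<^bsub>\<Gamma> (k + m)\<^esub> x
            then (\<lambda>(a, b). Phi G H l k X a * Phi G H l m Y b) y else 0)
        = l (entry_sum G (k + m) g) * (of_nat (card H ^ (k + m)) * (\<Sum>x'\<in>carrier (\<Gamma>' (k + m)). T' x'))" .
    have cK: "card (carrier (\<Gamma> k \<times>\<times> \<Gamma> m)) = card H ^ (k + m) * card (carrier (\<Gamma>' k \<times>\<times> \<Gamma>' m))"
      by (simp add: card_cartesian_product card_Gamma power_add)
    have RHS: "prodR G H k m (Phi G H l k X) (Phi G H l m Y) g
       = l (entry_sum G (k + m) g) * (of_nat (card H ^ (k + m)) * (\<Sum>x'\<in>carrier (\<Gamma>' (k + m)). T' x'))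
         / of_nat (card H ^ (k + m) * card (carrier (\<Gamma>' k \<times>\<times> \<Gamma>' m)))"
      using True S cK by (simp add: prodR_def ind_def)
    have nz: "(of_nat (card H ^ (k + m)) :: complex) \<noteq> 0" using cardH by simp
    show ?thesis using LHS RHS nz cardH by (simp add: field_simps)
  qed
qed

lemma coprod_thm:
  assumes l: "dual_char G H l"
  shows "coprodR G H k m (Phi G H l (k + m) X) = Phi_tensor G H l k m (coprodR (G Mod H) {H} k m X)"
proof
  fix z :: "((nat \<Rightarrow> nat) \<times> (nat \<Rightarrow> 'a)) \<times> ((nat \<Rightarrow> nat) \<times> (nat \<Rightarrow> 'a))"
  obtain g1 g2 where z: "z = (g1, g2)" by (cases z)
  show "coprodR G H k m (Phi G H l (k + m) X) z = Phi_tensor G H l k m (coprodR (G Mod H) {H} k m X) z"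
  proof (cases "g1 \<in> carrier (\<Gamma> k) \<and> g2 \<in> carrier (\<Gamma> m)")
    case False
    then show ?thesis by (auto simp: z coprodR_def res_def Phi_tensor_def)
  next
    case True
    obtain \<sigma>1 f1 \<sigma>2 f2 where yy: "g1 = (\<sigma>1, f1)" "g2 = (\<sigma>2, f2)" by (cases g1, cases g2)
    have fc: "\<forall>i<k. f1 i \<in> carrier G" "\<forall>i<m. f2 i \<in> carrier G"
      using True yy by (auto simp: GM.mg_carrier_iff)
    have bc: "block_emb k m (g1, g2) \<in> carrier (\<Gamma> (k + m))" using True GM.block_carrier by blast
    have es: "entry_sum G (k + m) (block_emb k m (g1, g2)) = entry_sum G k g1 \<otimes> entry_sum G m g2"
      using GM.es_block[OF fc] yy by simp
    have ll: "l (entry_sum G (k + m) (block_emb k m (g1, g2))) = l (entry_sum G k g1) * l (entry_sum G m g2)"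
      using es dual_mult[OF l] GM.es_K True by simp
    have rc: "red k g1 \<in> carrier (\<Gamma>' k)" "red m g2 \<in> carrier (\<Gamma>' m)" using True red_carrier by auto
    show ?thesis using True bc ll rc
      by (simp add: z coprodR_def res_def Phi_tensor_def Phi_def red_block)
  qed
qed

end



lemma smult_mat_vec:
  assumes "A \<in> carrier_mat nr nc" "v \<in> carrier_vec nc"
  shows "(c \<cdot>\<^sub>m A) *\<^sub>v v = c \<cdot>\<^sub>v (A *\<^sub>v (v :: complex vec))"
  by (rule eq_vecI) (use assms in \<open>auto simp: scalar_prod_def sum_distrib_left mult.assoc\<close>)

lemma smult_mat_mult:
  assumes "A \<in> carrier_mat d d" "B \<in> carrier_mat d d"
  shows "(a * b) \<cdot>\<^sub>m (A * B) = (a \<cdot>\<^sub>m A) * (b \<cdot>\<^sub>m (B :: complex mat))"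
  by (rule eq_matI) (use assms in \<open>auto simp: scalar_prod_def sum_distrib_left mult_ac\<close>)

lemma smult_one_mat: "(1::complex) \<cdot>\<^sub>m A = A"
  by (rule eq_matI) auto

lemma mat_tr_smult:
  assumes "A \<in> carrier_mat d d"
  shows "mat_tr (c \<cdot>\<^sub>m A) = c * mat_tr (A :: complex mat)"
  using assms by (simp add: mat_tr_def sum_distrib_left)

context setting
begin

definition lift :: "('a \<Rightarrow> complex) \<Rightarrow> nat \<Rightarrow> _ \<Rightarrow> _ \<Rightarrow> complex mat" where
  "lift l n \<rho> = (\<lambda>g. l (entry_sum G n g) \<cdot>\<^sub>m \<rho> (red n g))"

lemma lift_rep:
  assumes l: "dual_char G H l" and r: "is_rep (\<Gamma>' n) d \<rho>"
  shows "is_rep (\<Gamma> n) d (lift l n \<rho>)"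
  unfolding is_rep_def
proof (intro conjI ballI)
  have r1: "\<And>g. g \<in> carrier (\<Gamma>' n) \<Longrightarrow> \<rho> g \<in> carrier_mat d d" using r by (simp add: is_rep_def)
  fix g assume g: "g \<in> carrier (\<Gamma> n)"
  then show "lift l n \<rho> g \<in> carrier_mat d d" using r1 red_carrier by (simp add: lift_def)
  fix h assume h: "h \<in> carrier (\<Gamma> n)"
  have "lift l n \<rho> (g \<otimes>\<^bsub>\<Gamma> n\<^esub> h)
     = (l (entry_sum G n g) * l (entry_sum G n h)) \<cdot>\<^sub>m (\<rho> (red n g) * \<rho> (red n h))"
    using g h r red_carrier GM.es_hom dual_mult[OF l] GM.es_K
    by (simp add: lift_def red_mult is_rep_def)
  also have "\<dots> = lift l n \<rho> g * lift l n \<rho> h"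
    using smult_mat_mult[OF r1[OF red_carrier[OF g]] r1[OF red_carrier[OF h]]] by (simp add: lift_def)
  finally show "lift l n \<rho> (g \<otimes>\<^bsub>\<Gamma> n\<^esub> h) = lift l n \<rho> g * lift l n \<rho> h" .
next
  have "\<rho> \<one>\<^bsub>\<Gamma>' n\<^esub> = 1\<^sub>m d" using r by (simp add: is_rep_def)
  then show "lift l n \<rho> \<one>\<^bsub>\<Gamma> n\<^esub> = 1\<^sub>m d"
    using red_one dual_one[OF l] by (simp add: lift_def GM.mg_one GM.es_one smult_one_mat)
qed

lemma lift_char:
  assumes r: "is_rep (\<Gamma>' n) d \<rho>"
  shows "char_of (\<Gamma> n) (lift l n \<rho>) = Phi G H l n (char_of (\<Gamma>' n) \<rho>)"
proof
  fix g show "char_of (\<Gamma> n) (lift l n \<rho>) g = Phi G H l n (char_of (\<Gamma>' n) \<rho>) g"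
  proof (cases "g \<in> carrier (\<Gamma> n)")
    case True
    then have "\<rho> (red n g) \<in> carrier_mat d d" using r red_carrier by (simp add: is_rep_def)
    then show ?thesis using True red_carrier
      by (simp add: char_of_def Phi_def lift_def mat_tr_smult)
  qed (simp add: char_of_def Phi_def)
qed

lemma lift_irred:
  assumes l: "dual_char G H l" and r: "irred_rep (\<Gamma>' n) d \<rho>"
  shows "irred_rep (\<Gamma> n) d (lift l n \<rho>)"
proof -
  have rr: "is_rep (\<Gamma>' n) d \<rho>" and d: "0 < d"
    and ir: "\<And>W. inv_subspace (\<Gamma>' n) d \<rho> W \<Longrightarrow> W = {0\<^sub>v d} \<or> W = carrier_vec d"
    using r by (auto simp: irred_rep_def)
  have r1: "\<And>g. g \<in> carrier (\<Gamma>' n) \<Longrightarrow> \<rho> g \<in> carrier_mat d d" using rr by (simp add: is_rep_def)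
  have "W = {0\<^sub>v d} \<or> W = carrier_vec d" if W: "inv_subspace (\<Gamma> n) d (lift l n \<rho>) W" for W
  proof -
    have W1: "W \<subseteq> carrier_vec d" "\<forall>c. \<forall>v\<in>W. c \<cdot>\<^sub>v v \<in> W"
      "\<forall>g\<in>carrier (\<Gamma> n). \<forall>v\<in>W. lift l n \<rho> g *\<^sub>v v \<in> W"
      using W by (auto simp: inv_subspace_def)
    have "\<forall>g'\<in>carrier (\<Gamma>' n). \<forall>v\<in>W. \<rho> g' *\<^sub>v v \<in> W"
    proof (intro ballI)
      fix g' v assume g': "g' \<in> carrier (\<Gamma>' n)" and v: "v \<in> W"
      obtain g where g: "g \<in> carrier (\<Gamma> n)" "red n g = g'" using red_surj[of n] g' by (metis imageE)
      have nz: "l (entry_sum G n g) \<noteq> 0" using dual_nz[OF l g(1)] .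
      have vc: "v \<in> carrier_vec d" using v W1(1) by blast
      have "lift l n \<rho> g *\<^sub>v v = l (entry_sum G n g) \<cdot>\<^sub>v (\<rho> g' *\<^sub>v v)"
        using smult_mat_vec[OF r1[OF g'] vc] g by (simp add: lift_def)
      then have "\<rho> g' *\<^sub>v v = (1 / l (entry_sum G n g)) \<cdot>\<^sub>v (lift l n \<rho> g *\<^sub>v v)"
        using nz by (simp add: smult_smult_assoc)
      then show "\<rho> g' *\<^sub>v v \<in> W" using W1(2,3) g v by simp
    qed
    then have "inv_subspace (\<Gamma>' n) d \<rho> W" using W by (simp add: inv_subspace_def)
    then show ?thesis by (rule ir)
  qed
  then show ?thesis using lift_rep[OF l rr] d by (simp add: irred_rep_def)
qed

lemma Phi_diff: "Phi G H l n (\<lambda>g. a g - b g) = (\<lambda>g. Phi G H l n a g - Phi G H l n b g)"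
  by (simp add: Phi_def fun_eq_iff algebra_simps)

lemma Phi_add: "Phi G H l n (\<lambda>g. a g + b g) = (\<lambda>g. Phi G H l n a g + Phi G H l n b g)"
  by (simp add: Phi_def fun_eq_iff algebra_simps)

lemma Phi_char:
  assumes l: "dual_char G H l" and c: "is_char (\<Gamma>' n) \<chi>"
  shows "is_char (\<Gamma> n) (Phi G H l n \<chi>)"
proof -
  obtain d \<rho> where r: "is_rep (\<Gamma>' n) d \<rho>" and e: "\<chi> = char_of (\<Gamma>' n) \<rho>"
    using c by (auto simp: is_char_def)
  show ?thesis unfolding is_char_def e using lift_rep[OF l r] lift_char[OF r] by metis
qed

lemma Phi_Rn:
  assumes l: "dual_char G H l" and x: "x \<in> Rn (G Mod H) {H} n"
  shows "Phi G H l n x \<in> Rn G H n"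
proof -
  obtain c1 c2 where c: "is_char (\<Gamma>' n) c1" "is_char (\<Gamma>' n) c2" and e: "x = (\<lambda>g. c1 g - c2 g)"
    using x by (auto simp: Rn_def virt_chars_def)
  show ?thesis unfolding Rn_def virt_chars_def e Phi_diff
    using Phi_char[OF l c(1)] Phi_char[OF l c(2)] by blast
qed

lemma Rn_zero:
  assumes x: "x \<in> Rn (G Mod H) {H} n" and g: "g \<notin> carrier (\<Gamma>' n)"
  shows "x g = 0"
proof -
  obtain c1 c2 where c: "is_char (\<Gamma>' n) c1" "is_char (\<Gamma>' n) c2" and e: "x = (\<lambda>g. c1 g - c2 g)"
    using x by (auto simp: Rn_def virt_chars_def)
  have "c1 g = 0" "c2 g = 0" using c g by (auto simp: is_char_def char_of_def)
  then show ?thesis using e by simp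
qed

lemma Phi_inj:
  assumes l: "dual_char G H l"
  shows "inj_on (Phi G H l n) (Rn (G Mod H) {H} n)"
proof (rule inj_onI)
  fix x y assume x: "x \<in> Rn (G Mod H) {H} n" and y: "y \<in> Rn (G Mod H) {H} n"
    and e: "Phi G H l n x = Phi G H l n y"
  show "x = y"
  proof
    fix g' show "x g' = y g'"
    proof (cases "g' \<in> carrier (\<Gamma>' n)")
      case True
      obtain g where g: "g \<in> carrier (\<Gamma> n)" "red n g = g'" using red_surj[of n] True by (metis imageE)
      have "l (entry_sum G n g) * x g' = l (entry_sum G n g) * y g'"
        using fun_cong[OF e, of g] g by (simp add: Phi_def)
      then show ?thesis using dual_nz[OF l g(1)] by simp
    next
      case False
      then show ?thesis using Rn_zero x y by metis
    qed
  qed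
qed

lemma unit_thm:
  assumes l: "dual_char G H l"
  shows "Phi G H l 0 (unitR (G Mod H) {H}) = unitR G H"
proof
  fix g show "Phi G H l 0 (unitR (G Mod H) {H}) g = unitR G H g"
  proof (cases "g \<in> carrier (\<Gamma> 0)")
    case True
    then show ?thesis using red_carrier dual_one[OF l] by (simp add: Phi_def unitR_def entry_sum_def)
  qed (simp add: Phi_def unitR_def)
qed

lemma counit_thm:
  assumes l: "dual_char G H l"
  shows "Phi G H l 0 x \<one>\<^bsub>\<Gamma> 0\<^esub> = x \<one>\<^bsub>\<Gamma>' 0\<^esub>"
proof -
  interpret A: group "\<Gamma> 0" by (rule GM.mg_group)
  have oc: "(id, \<lambda>_. \<one>) \<in> carrier (\<Gamma> 0)" using A.one_closed by (simp add: GM.mg_one)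
  show ?thesis using red_one dual_one[OF l] oc by (simp add: Phi_def GM.mg_one GM.es_one)
qed

lemma irr_thm:
  assumes l: "dual_char G H l" and c: "irr_char (\<Gamma>' n) \<chi>"
  shows "irr_char (\<Gamma> n) (Phi G H l n \<chi>)"
proof -
  obtain d \<rho> where r: "irred_rep (\<Gamma>' n) d \<rho>" and e: "\<chi> = char_of (\<Gamma>' n) \<rho>"
    using c by (auto simp: irr_char_def)
  have rr: "is_rep (\<Gamma>' n) d \<rho>" using r by (simp add: irred_rep_def)
  show ?thesis unfolding irr_char_def e using lift_irred[OF l r] lift_char[OF rr] by metis
qed

end

theorem proposition1:
  fixes G :: "'a monoid" and H :: "'a set" and l :: "'a \<Rightarrow> complex"
  assumes "comm_group G" and "finite (carrier G)" and "subgroup H G"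
    and "dual_char G H l"
  shows
    "(\<forall>n. \<forall>x\<in>Rn (G Mod H) {H} n. Phi G H l n x \<in> Rn G H n)
   \<and> (\<forall>n. inj_on (Phi G H l n) (Rn (G Mod H) {H} n))
   \<and> (\<forall>n. \<forall>x\<in>Rn (G Mod H) {H} n. \<forall>y\<in>Rn (G Mod H) {H} n.
          Phi G H l n (\<lambda>g. x g + y g) = (\<lambda>g. Phi G H l n x g + Phi G H l n y g))
   \<and> (\<forall>k m. \<forall>x\<in>Rn (G Mod H) {H} k. \<forall>y\<in>Rn (G Mod H) {H} m.
          Phi G H l (k + m) (prodR (G Mod H) {H} k m x y)
            = prodR G H k m (Phi G H l k x) (Phi G H l m y))
   \<and> Phi G H l 0 (unitR (G Mod H) {H}) = unitR G H
   \<and> (\<forall>x\<in>Rn (G Mod H) {H} 0.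
          Phi G H l 0 x \<one>\<^bsub>mono_grp G H 0\<^esub> = x \<one>\<^bsub>mono_grp (G Mod H) {H} 0\<^esub>)
   \<and> (\<forall>k m. \<forall>x\<in>Rn (G Mod H) {H} (k + m).
          coprodR G H k m (Phi G H l (k + m) x)
            = Phi_tensor G H l k m (coprodR (G Mod H) {H} k m x))
   \<and> (\<forall>n \<chi>. irr_char (mono_grp (G Mod H) {H} n) \<chi>
          \<longrightarrow> irr_char (mono_grp G H n) (Phi G H l n \<chi>))"
proof -
  interpret S: setting G H
    by (rule setting.intro[OF assms(1)], rule setting_axioms.intro[OF assms(3) assms(2)])
  note l = assms(4)
  show ?thesis
    using S.Phi_Rn[OF l] S.Phi_inj[OF l] S.Phi_add S.prod_thm[OF l] S.unit_thm[OF l]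
      S.counit_thm[OF l] S.coprod_thm[OF l] S.irr_thm[OF l]
    by blast
qed


end
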